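(* Let $P\subset\mathbb R^n$ be a bounded open convex set and $\mu$ Lebesgue measure. (a) For every $\varepsilon>0$ there exists a convex $\phi_\varepsilon\in L^1(P)$ with $\int_P\phi_\varepsilon\,d\mu=0$ and $\inf_P\phi_\varepsilon<0$ such that $\frac{1}{\mu(P)}\int_P|\phi_\varepsilon|\,d\mu\ge -2(1-\varepsilon)\inf_P\phi_\varepsilon$. (b) There is no convex $\phi\in L^1(P)$ with $\int_P\phi\,d\mu=0$, $\phi\not\equiv 0$, and $\frac{1}{\mu(P)}\int_P|\phi|\,d\mu=-2\inf_P\phi$.
   Context: For convex $\phi\in L^1(P)$ with $\int_P\phi=0$ one always has $\frac{1}{\mu(P)}\int_P|\phi|\,d\mu\le-2\inf_P\phi$. *)

theory Defs
  imports "HOL-Analysis.Analysis"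
begin

end

theory Submission
  imports Defs
begin

lemma cont_zero_int:
  fixes f :: "'a::euclidean_space \<Rightarrow> real"
  assumes U: "open U" and cont: "continuous_on U f" and int: "set_integrable lebesgue U f"
    and nn: "\<And>x. x \<in> U \<Longrightarrow> 0 \<le> f x" and z: "(\<integral>x\<in>U. f x \<partial>lebesgue) = 0" and y: "y \<in> U"
  shows "f y = 0"
proof (rule ccontr)
  assume "f y \<noteq> 0"
  then have fy: "f y > 0" using nn[OF y] by linarith
  define S where "S = U \<inter> f -` {0<..}"
  have So: "open S" unfolding S_def using continuous_open_preimage[OF cont U] by auto
  have "S \<noteq> {}" using fy y by (auto simp: S_def)
  then have nneg: "\<not> negligible S" using open_not_negligible So by blast
  have int': "integrable lebesgue (\<lambda>x. indicator U x * f x)"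
    using int by (simp add: set_integrable_def)
  have "integral\<^sup>L lebesgue (\<lambda>x. indicator U x * f x) = 0"
    using z by (simp add: set_lebesgue_integral_def)
  moreover have "AE x in lebesgue. 0 \<le> indicator U x * f x"
    by (rule AE_I2) (auto simp: indicator_def nn)
  ultimately have AE: "AE x in lebesgue. indicator U x * f x = 0"
    using integral_nonneg_eq_0_iff_AE[OF int'] by blast
  have "AE x in lebesgue. x \<notin> S"
    by (rule AE_mp[OF AE AE_I2]) (auto simp: S_def indicator_def)
  moreover have "S \<in> sets lebesgue" using So by auto
  ultimately have "S \<in> null_sets lebesgue" using AE_iff_null_sets by blast
  then show False using nneg negligible_iff_null_sets by blast
qed

lemma convex_bdd_below:
  fixes f :: "'a::euclidean_space \<Rightarrow> real"
  assumes "bounded P" "open P" "convex_on P f" "x0 \<in> P"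
  shows "bdd_below (f ` P)"
proof -
  have "continuous_on P f" using convex_on_continuous assms by blast
  then have "isCont f x0" using assms continuous_on_eq_continuous_at by blast
  then obtain r where r: "r > 0" "\<And>z. dist z x0 < r \<Longrightarrow> dist (f z) (f x0) < 1"
    unfolding continuous_at_eps_delta by (meson zero_less_one)
  obtain r' where r': "r' > 0" "ball x0 r' \<subseteq> P" using open_contains_ball assms by blast
  define e where "e = min r r'"
  have e: "e > 0" using r r' by (simp add: e_def)
  obtain b where b: "b > 0" "\<forall>x\<in>P. norm x \<le> b" using assms(1) bounded_pos by blast
  define D where "D = b + norm x0"
  have D: "D > 0" using b by (simp add: D_def add_pos_nonneg)
  have Dx: "norm (x0 - x) \<le> D" if "x \<in> P" for x
    using b(2) that norm_triangle_ineq4[of x0 x] by (fastforce simp: D_def)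
  define t where "t = e / (2*D)"
  have t: "t > 0" using e D by (simp add: t_def)
  show ?thesis
  proof (rule bdd_belowI2)
    fix x assume x: "x \<in> P"
    define z where "z = x0 + t *\<^sub>R (x0 - x)"
    have "norm (z - x0) = t * norm (x0 - x)" using t by (simp add: z_def)
    also have "\<dots> \<le> t * D" using Dx[OF x] t by (simp add: mult_left_mono)
    also have "\<dots> = e / 2" using D by (simp add: t_def)
    finally have nz: "norm (z - x0) < e" using e by linarith
    then have "dist z x0 < r" by (simp add: dist_norm e_def)
    then have fz: "f z < f x0 + 1" using r(2)[of z] by (simp add: dist_real_def abs_less_iff)
    have "z \<in> ball x0 r'" using nz by (simp add: dist_norm e_def norm_minus_commute)
    then have zP: "z \<in> P" using r' by blast
    have eq: "(1 + t) *\<^sub>R x0 = z + t *\<^sub>R x" by (simp add: z_def algebra_simps)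
    have x0eq: "x0 = (1/(1+t)) *\<^sub>R z + (t/(1+t)) *\<^sub>R x"
    proof -
      have "x0 = (1/(1+t)) *\<^sub>R ((1 + t) *\<^sub>R x0)" using t by simp
      also have "\<dots> = (1/(1+t)) *\<^sub>R z + (t/(1+t)) *\<^sub>R x"
        unfolding eq by (simp add: scaleR_add_right)
      finally show ?thesis .
    qed
    have uv: "1/(1+t) + t/(1+t) = 1" using t by (simp add: add_divide_distrib[symmetric])
    have "f ((1/(1+t)) *\<^sub>R z + (t/(1+t)) *\<^sub>R x) \<le> (1/(1+t)) * f z + (t/(1+t)) * f x"
      using assms(3) zP x t uv unfolding convex_on_def
      by (metis (no_types, lifting) add_pos_pos divide_pos_pos less_eq_real_def zero_less_one)
    then have "f x0 \<le> (1/(1+t)) * f z + (t/(1+t)) * f x" using x0eq by simp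
    also have "(1/(1+t)) * f z + (t/(1+t)) * f x = (f z + t * f x) / (1+t)"
      by (simp add: add_divide_distrib)
    finally have "(1+t) * f x0 \<le> f z + t * f x" using t
      by (simp add: pos_le_divide_eq mult.commute)
    then have "t * (f x0 - 1/t) \<le> t * f x" using fz t by (simp add: algebra_simps)
    then show "f x0 - 1/t \<le> f x" using t by simp
  qed
qed


lemma partA:
  fixes P :: "'a::euclidean_space set"
  assumes bP: "bounded P" and oP: "open P" and cP: "convex P" and ne: "P \<noteq> {}" and eps: "\<epsilon> > 0"
  shows "\<exists>\<phi> :: 'a \<Rightarrow> real.
            convex_on P \<phi> \<and> set_integrable lebesgue P \<phi> \<and>
            (\<integral>x\<in>P. \<phi> x \<partial>lebesgue) = 0 \<and>
            Inf (\<phi> ` P) < 0 \<and>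
            (1 / measure lebesgue P) * (\<integral>x\<in>P. \<bar>\<phi> x\<bar> \<partial>lebesgue)
              \<ge> - 2 * (1 - \<epsilon>) * Inf (\<phi> ` P)"
proof -
  have Pl: "P \<in> lmeasurable" using lmeasurable_open bP oP by blast
  have PS: "P \<in> sets lebesgue" using Pl fmeasurableD by blast
  have Pfin: "emeasure lebesgue P \<noteq> \<infinity>" by (metis fmeasurableD2 Pl infinity_ennreal_def)
  define \<mu> where "\<mu> = measure lebesgue P"
  have \<mu>pos: "\<mu> > 0"
  proof -
    have "\<not> negligible P" using open_not_negligible oP ne by blast
    then have "\<mu> \<noteq> 0" using negligible_iff_measure0[OF Pl] by (simp add: \<mu>_def)
    then show ?thesis by (simp add: \<mu>_def order_less_le)
  qed
  obtain v :: 'a where v: "v \<in> Basis" using nonempty_Basis by blast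
  have nv: "v \<bullet> v = 1" using v by simp
  obtain b where b: "b > 0" "\<forall>x\<in>P. norm x \<le> b" using bP bounded_pos by blast
  have bdd: "bdd_above ((\<lambda>x. v \<bullet> x) ` P)"
  proof (rule bdd_aboveI2)
    fix x assume "x \<in> P"
    then show "v \<bullet> x \<le> b" using b Basis_le_norm[OF v, of x]
      by (simp add: inner_commute) (smt (verit))
  qed
  define s where "s = Sup ((\<lambda>x. v \<bullet> x) ` P)"
  have lt: "v \<bullet> x < s" if x: "x \<in> P" for x
  proof -
    obtain e where e: "e > 0" "ball x e \<subseteq> P" using open_contains_ball oP x by blast
    define y where "y = x + (e/2) *\<^sub>R v"
    have "dist x y = e/2" using e v by (simp add: y_def dist_norm)
    then have "y \<in> P" using e by auto
    then have "v \<bullet> y \<le> s" unfolding s_def by (rule cSup_upper[OF imageI bdd])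
    moreover have "v \<bullet> y = v \<bullet> x + e/2" by (simp add: y_def inner_add_right nv)
    ultimately show ?thesis using e by linarith
  qed
  obtain x0 where x0: "x0 \<in> P" using ne by blast
  define d where "d = s - v \<bullet> x0"
  have d: "d > 0" using lt[OF x0] by (simp add: d_def)
  define A where "A n = P \<inter> {x. s - d / (real n + 1) < v \<bullet> x}" for n
  have Aopen: "open (A n)" for n unfolding A_def
    using oP open_halfspace_gt[of "s - d / (real n + 1)" v] by (auto intro!: open_Int)
  have Asets: "range A \<subseteq> sets lebesgue" using Aopen by auto
  have Asub: "A n \<subseteq> P" for n by (auto simp: A_def)
  have Afin: "emeasure lebesgue (A n) \<noteq> \<infinity>" for n
    using emeasure_mono[OF Asub PS] Pfin by (metis infinity_ennreal_def top.extremum_uniqueI)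
  have Adec: "decseq A"
  proof (rule decseq_SucI)
    fix n
    have "d / (real (Suc n) + 1) \<le> d / (real n + 1)" using d by (simp add: frac_le)
    then show "A (Suc n) \<subseteq> A n" by (auto simp: A_def)
  qed
  have Aint: "(\<Inter>n. A n) = {}"
  proof (rule ccontr)
    assume "(\<Inter>n. A n) \<noteq> {}"
    then obtain x where x: "\<And>n. x \<in> A n" by blast
    then have xP: "x \<in> P" by (auto simp: A_def)
    have g: "s - v \<bullet> x > 0" using lt[OF xP] by simp
    obtain n :: nat where n: "d / (s - v \<bullet> x) < real n" using reals_Archimedean2 by blast
    then have "d / (s - v \<bullet> x) < real n + 1" by linarith
    then have "d < (real n + 1) * (s - v \<bullet> x)" using g by (simp add: divide_less_eq)
    then have "d / (real n + 1) < s - v \<bullet> x" by (simp add: divide_less_eq mult.commute)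
    moreover have "s - d / (real n + 1) < v \<bullet> x" using x[of n] by (simp add: A_def)
    ultimately show False by linarith
  qed
  have lim: "(\<lambda>n. measure lebesgue (A n)) \<longlonglongrightarrow> 0"
    using Lim_measure_decseq[OF Asets Adec Afin] Aint by simp
  have em: "\<epsilon> * \<mu> > 0" using eps \<mu>pos by simp
  have "eventually (\<lambda>n. measure lebesgue (A n) < \<epsilon> * \<mu>) sequentially"
    using order_tendstoD(2)[OF lim em] .
  then obtain N0 where N0: "\<And>n. n \<ge> N0 \<Longrightarrow> measure lebesgue (A n) < \<epsilon> * \<mu>"
    unfolding eventually_sequentially by blast
  define N where "N = N0"
  have N: "measure lebesgue (A N) < \<epsilon> * \<mu>" using N0[of N0] by (simp add: N_def)
  define a where "a = s - d / (real N + 1)"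
  define C where "C = A N"
  have Ceq: "C = P \<inter> {x. a < v \<bullet> x}" by (simp add: C_def A_def a_def)
  have CS: "C \<in> sets lebesgue" using Asets by (auto simp: C_def)
  have CP: "C \<subseteq> P" using Asub by (simp add: C_def)
  define \<psi> where "\<psi> x = max 0 (v \<bullet> x - a)" for x
  have \<psi>cont: "continuous_on S \<psi>" for S unfolding \<psi>_def by (intro continuous_intros)
  have \<psi>nn: "0 \<le> \<psi> x" for x by (simp add: \<psi>_def)
  obtain bb where bb: "P \<subseteq> cbox (-bb) bb" using bounded_subset_cbox_symmetric bP by blast
  have \<psi>int: "set_integrable lebesgue P \<psi>"
    using set_integrable_subset[OF absolutely_integrable_continuous[OF \<psi>cont] PS bb] .
  define I where "I = (\<integral>x\<in>P. \<psi> x \<partial>lebesgue)"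
  have I0: "I \<noteq> 0"
  proof
    assume "I = 0"
    have "a < s" using d by (simp add: a_def)
    then obtain y where "y \<in> (\<lambda>x. v \<bullet> x) ` P" "a < y" unfolding s_def
      using ne by (meson image_is_empty less_cSupE)
    then obtain x where x: "x \<in> P" "a < v \<bullet> x" by blast
    have "\<psi> x = 0" using cont_zero_int[OF oP \<psi>cont \<psi>int] \<psi>nn \<open>I = 0\<close> x(1) by (simp add: I_def)
    then show False using x(2) by (simp add: \<psi>_def)
  qed
  have "I \<ge> 0" unfolding I_def set_lebesgue_integral_def
    by (rule integral_nonneg_AE) (auto simp: \<psi>nn indicator_def)
  then have Ipos: "I > 0" using I0 by simp
  define c where "c = I / \<mu>"
  have cpos: "c > 0" using Ipos \<mu>pos by (simp add: c_def)
  define \<phi> where "\<phi> x = \<psi> x - c" for x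
  have cint: "set_integrable lebesgue P (\<lambda>x. c)" using Pl by simp
  have \<phi>int: "set_integrable lebesgue P \<phi>" unfolding \<phi>_def using set_integral_diff(1)[OF \<psi>int cint] .
  have intc: "(\<integral>x\<in>P. c \<partial>lebesgue) = \<mu> * c" using set_integral_const[OF PS Pfin, of c] by (simp add: \<mu>_def)
  have \<phi>0: "(\<integral>x\<in>P. \<phi> x \<partial>lebesgue) = 0"
    unfolding \<phi>_def using set_integral_diff(2)[OF \<psi>int cint] intc \<mu>pos
    by (simp add: I_def[symmetric] c_def)
  have "d / (real N + 1) \<le> d" using d by (simp add: divide_le_eq)
  then have "v \<bullet> x0 - a \<le> 0" by (simp add: a_def d_def)
  then have \<psi>x0: "\<psi> x0 = 0" by (simp add: \<psi>_def)
  have Inf: "Inf (\<phi> ` P) = - c"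
    by (rule cInf_eq_minimum) (use x0 \<psi>x0 \<psi>nn in \<open>auto simp: \<phi>_def\<close>)
  have conv: "convex_on P \<phi>"
    unfolding convex_on_def
  proof (intro conjI ballI allI impI)
    show "convex P" by (rule cP)
  next
    fix x y and u w :: real
    assume u: "0 \<le> u" and w: "0 \<le> w" and uw: "u + w = 1"
    define p where "p = v \<bullet> x - a"
    define q where "q = v \<bullet> y - a"
    have "v \<bullet> (u *\<^sub>R x + w *\<^sub>R y) = u * (v \<bullet> x) + w * (v \<bullet> y)"
      by (simp add: inner_add_right)
    have "u * p + w * q = u * (v \<bullet> x) + w * (v \<bullet> y) - (u + w) * a"
      by (simp add: p_def q_def algebra_simps)
    then have e1: "v \<bullet> (u *\<^sub>R x + w *\<^sub>R y) - a = u * p + w * q"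
      using uw \<open>v \<bullet> (u *\<^sub>R x + w *\<^sub>R y) = u * (v \<bullet> x) + w * (v \<bullet> y)\<close> by simp
    have m1: "u * p \<le> u * max 0 p" using u by (simp add: mult_left_mono)
    have m2: "w * q \<le> w * max 0 q" using w by (simp add: mult_left_mono)
    have m3: "0 \<le> u * max 0 p" "0 \<le> w * max 0 q" using u w by simp_all
    have "max 0 (u * p + w * q) \<le> u * max 0 p + w * max 0 q" using m1 m2 m3 by linarith
    then have A1: "\<psi> (u *\<^sub>R x + w *\<^sub>R y) \<le> u * \<psi> x + w * \<psi> y"
      unfolding \<psi>_def e1 p_def[symmetric] q_def[symmetric] by simp
    have A2: "u * \<phi> x + w * \<phi> y = u * \<psi> x + w * \<psi> y - (u + w) * c"
      by (simp add: \<phi>_def right_diff_distrib distrib_right)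
    show "\<phi> (u *\<^sub>R x + w *\<^sub>R y) \<le> u * \<phi> x + w * \<phi> y"
      unfolding A2 uw using A1 by (simp add: \<phi>_def)
  qed
  have absint: "set_integrable lebesgue P (\<lambda>x. \<bar>\<phi> x\<bar>)" using set_integrable_abs[OF \<phi>int] .
  define g where "g x = \<bar>\<phi> x\<bar> - \<phi> x" for x
  have gint: "set_integrable lebesgue P g" unfolding g_def using set_integral_diff(1)[OF absint \<phi>int] .
  have J: "(\<integral>x\<in>P. \<bar>\<phi> x\<bar> \<partial>lebesgue) = (\<integral>x\<in>P. g x \<partial>lebesgue)"
    unfolding g_def using set_integral_diff(2)[OF absint \<phi>int] \<phi>0 by simp
  define h where "h x = 2 * c * indicator (P - C) x" for x
  have gh: "h x \<le> g x" if x: "x \<in> P" for x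
  proof (cases "x \<in> C")
    case True then show ?thesis by (simp add: h_def g_def)
  next
    case False
    then have "v \<bullet> x \<le> a" using x Ceq by auto
    then have "\<phi> x = - c" by (simp add: \<phi>_def \<psi>_def)
    then show ?thesis using x False cpos by (simp add: h_def g_def)
  qed
  have PCS: "P - C \<in> sets lebesgue" using PS CS by auto
  have PCfin: "emeasure lebesgue (P - C) < \<infinity>"
    using emeasure_mono[of "P - C" P lebesgue] PS Pfin
    by (metis Diff_subset infinity_ennreal_def order_le_less_trans top.not_eq_extremum)
  have indint: "integrable lebesgue (indicator (P - C) :: 'a \<Rightarrow> real)"
    using integrable_indicator_iff PCS PCfin by auto
  have hfun: "(\<lambda>x. indicator P x *\<^sub>R h x) = h"
    by (auto simp: h_def indicator_def)
  have hint0: "integrable lebesgue h" unfolding h_def using integrable_mult_right[OF indint] by simp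
  have hint: "set_integrable lebesgue P h" unfolding set_integrable_def hfun by (rule hint0)
  have hval: "(\<integral>x\<in>P. h x \<partial>lebesgue) = 2 * c * measure lebesgue (P - C)"
    unfolding set_lebesgue_integral_def hfun unfolding h_def
    by simp
  have mPC: "measure lebesgue (P - C) = \<mu> - measure lebesgue C"
    unfolding \<mu>_def using measure_Diff[OF Pfin PS CS CP] .
  have Jge: "(\<integral>x\<in>P. \<bar>\<phi> x\<bar> \<partial>lebesgue) \<ge> 2 * c * (\<mu> - measure lebesgue C)"
    unfolding J using set_integral_mono[OF hint gint gh] hval mPC by simp
  have mC: "measure lebesgue C \<le> \<epsilon> * \<mu>" using N by (simp add: C_def)
  have "2 * c * (1 - \<epsilon>) * \<mu> \<le> 2 * c * (\<mu> - measure lebesgue C)"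
    using mC cpos by (simp add: algebra_simps mult_left_mono)
  also have "\<dots> \<le> (\<integral>x\<in>P. \<bar>\<phi> x\<bar> \<partial>lebesgue)" by (rule Jge)
  finally have "2 * c * (1 - \<epsilon>) \<le> (1 / \<mu>) * (\<integral>x\<in>P. \<bar>\<phi> x\<bar> \<partial>lebesgue)"
    using \<mu>pos by (simp add: pos_le_divide_eq)
  then have fin: "- 2 * (1 - \<epsilon>) * Inf (\<phi> ` P) \<le> (1 / measure lebesgue P) * (\<integral>x\<in>P. \<bar>\<phi> x\<bar> \<partial>lebesgue)"
    unfolding Inf \<mu>_def by (simp add: algebra_simps)
  have "Inf (\<phi> ` P) < 0" using Inf cpos by simp
  then show ?thesis using conv \<phi>int \<phi>0 fin by blast
qed


lemma partB:
  fixes P :: "'a::euclidean_space set"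
  assumes bP: "bounded P" and oP: "open P" and ne: "P \<noteq> {}"
  shows "\<not> (\<exists>\<phi> :: 'a \<Rightarrow> real.
            convex_on P \<phi> \<and> set_integrable lebesgue P \<phi> \<and>
            (\<integral>x\<in>P. \<phi> x \<partial>lebesgue) = 0 \<and>
            (\<exists>x\<in>P. \<phi> x \<noteq> 0) \<and>
            (1 / measure lebesgue P) * (\<integral>x\<in>P. \<bar>\<phi> x\<bar> \<partial>lebesgue)
              = - 2 * Inf (\<phi> ` P))"
proof
  assume "\<exists>\<phi> :: 'a \<Rightarrow> real.
            convex_on P \<phi> \<and> set_integrable lebesgue P \<phi> \<and>
            (\<integral>x\<in>P. \<phi> x \<partial>lebesgue) = 0 \<and>
            (\<exists>x\<in>P. \<phi> x \<noteq> 0) \<and>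
            (1 / measure lebesgue P) * (\<integral>x\<in>P. \<bar>\<phi> x\<bar> \<partial>lebesgue)
              = - 2 * Inf (\<phi> ` P)"
  then obtain \<phi> :: "'a \<Rightarrow> real" where conv: "convex_on P \<phi>" and int: "set_integrable lebesgue P \<phi>"
    and z: "(\<integral>x\<in>P. \<phi> x \<partial>lebesgue) = 0" and nz: "\<exists>x\<in>P. \<phi> x \<noteq> 0"
    and eq: "(1 / measure lebesgue P) * (\<integral>x\<in>P. \<bar>\<phi> x\<bar> \<partial>lebesgue) = - 2 * Inf (\<phi> ` P)"
    by blast
  have Pl: "P \<in> lmeasurable" using lmeasurable_open bP oP by blast
  have PS: "P \<in> sets lebesgue" using Pl fmeasurableD by blast
  have Pfin: "emeasure lebesgue P \<noteq> \<infinity>" by (metis fmeasurableD2 Pl infinity_ennreal_def)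
  define \<mu> where "\<mu> = measure lebesgue P"
  have \<mu>pos: "\<mu> > 0"
  proof -
    have "\<not> negligible P" using open_not_negligible oP ne by blast
    then have "\<mu> \<noteq> 0" using negligible_iff_measure0[OF Pl] by (simp add: \<mu>_def)
    then show ?thesis by (simp add: \<mu>_def order_less_le)
  qed
  obtain x0 where x0: "x0 \<in> P" using ne by blast
  have bdd: "bdd_below (\<phi> ` P)" using convex_bdd_below[OF bP oP conv x0] .
  define m where "m = Inf (\<phi> ` P)"
  have hm: "m \<le> \<phi> x" if "x \<in> P" for x unfolding m_def using cInf_lower[OF imageI bdd] that by blast
  have cont: "continuous_on P \<phi>" using convex_on_continuous[OF oP conv] .
  have absint: "set_integrable lebesgue P (\<lambda>x. \<bar>\<phi> x\<bar>)" using set_integrable_abs[OF int] .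
  define J where "J = (\<integral>x\<in>P. \<bar>\<phi> x\<bar> \<partial>lebesgue)"
  have eqJ: "J = - 2 * m * \<mu>"
  proof -
    have "(1 / \<mu>) * J = - 2 * m" using eq by (simp add: J_def m_def \<mu>_def)
    then show ?thesis using \<mu>pos by (simp add: field_simps)
  qed
  show False
  proof (cases "m < 0")
    case True
    define g where "g x = - 2 * m - (\<bar>\<phi> x\<bar> - \<phi> x)" for x
    have gnn: "0 \<le> g x" if "x \<in> P" for x using hm[OF that] True by (simp add: g_def abs_if)
    have cint: "set_integrable lebesgue P (\<lambda>x. - 2 * m)" using Pl by simp
    have dint: "set_integrable lebesgue P (\<lambda>x. \<bar>\<phi> x\<bar> - \<phi> x)" using set_integral_diff(1)[OF absint int] .
    have gint: "set_integrable lebesgue P g" unfolding g_def using set_integral_diff(1)[OF cint dint] .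
    have intc: "(\<integral>x\<in>P. - 2 * m \<partial>lebesgue) = \<mu> * (- 2 * m)"
      using set_integral_const[OF PS Pfin, of "- 2 * m"] by (simp add: \<mu>_def)
    have "(\<integral>x\<in>P. g x \<partial>lebesgue) = \<mu> * (- 2 * m) - (J - 0)"
      unfolding g_def using set_integral_diff(2)[OF cint dint] set_integral_diff(2)[OF absint int] intc z
      by (simp add: J_def)
    then have g0: "(\<integral>x\<in>P. g x \<partial>lebesgue) = 0" using eqJ by simp
    have gcont: "continuous_on P g" unfolding g_def using cont by (intro continuous_intros)
    have phim: "\<phi> x = m" if x: "x \<in> P" for x
    proof -
      have "g x = 0" using cont_zero_int[OF oP gcont gint gnn g0 x] .
      then show ?thesis using True by (simp add: g_def abs_if split: if_splits)
    qed
    have "(\<integral>x\<in>P. \<phi> x \<partial>lebesgue) = (\<integral>x\<in>P. m \<partial>lebesgue)"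
      unfolding set_lebesgue_integral_def
      by (rule Bochner_Integration.integral_cong) (auto simp: indicator_def phim)
    also have "\<dots> = \<mu> * m" using set_integral_const[OF PS Pfin, of m] by (simp add: \<mu>_def)
    finally show False using z True \<mu>pos by simp
  next
    case False
    then have nn: "0 \<le> \<phi> x" if "x \<in> P" for x using hm[OF that] by linarith
    have "\<phi> x = 0" if "x \<in> P" for x using cont_zero_int[OF oP cont int nn z that] .
    then show False using nz by blast
  qed
qed

theorem mainTheorem2:
  fixes P :: "'a::euclidean_space set"
  assumes "bounded P" and "open P" and "convex P" and "P \<noteq> {}"
  shows "(\<forall>\<epsilon>>0. \<exists>\<phi> :: 'a \<Rightarrow> real.
            convex_on P \<phi> \<and> set_integrable lebesgue P \<phi> \<and>
            (\<integral>x\<in>P. \<phi> x \<partial>lebesgue) = 0 \<and>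
            Inf (\<phi> ` P) < 0 \<and>
            (1 / measure lebesgue P) * (\<integral>x\<in>P. \<bar>\<phi> x\<bar> \<partial>lebesgue)
              \<ge> - 2 * (1 - \<epsilon>) * Inf (\<phi> ` P))
       \<and> \<not> (\<exists>\<phi> :: 'a \<Rightarrow> real.
            convex_on P \<phi> \<and> set_integrable lebesgue P \<phi> \<and>
            (\<integral>x\<in>P. \<phi> x \<partial>lebesgue) = 0 \<and>
            (\<exists>x\<in>P. \<phi> x \<noteq> 0) \<and>
            (1 / measure lebesgue P) * (\<integral>x\<in>P. \<bar>\<phi> x\<bar> \<partial>lebesgue)
              = - 2 * Inf (\<phi> ` P))"
  using partA[OF assms] partB[OF assms(1,2,4)] by blast

end
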